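(* Under noiseless asynchronous updates, each of the squeezing codes $\mathsf{R}$, $\mathsf{F}$, $\mathsf{M}$ on the $L\times L$ torus has exactly the two configurations $s_+$ (all spins $+1$) and $s_-$ (all spins $-1$) as absorbing states; i.e. a configuration $s$ is left unchanged by every possible single-site update (of either the $\wedge$ or the $\vee$ type, at any site) if and only if $s\in\{s_+,s_-\}$.
   Context: Spins $s_{\mathbf r}\in\{+1,-1\}$ on $\mathbf r\in(\mathbb Z/L\mathbb Z)^2$ (periodic boundary conditions); $\hat{\mathbf x}=(1,0)$, $\hat{\mathbf y}=(0,1)$. Treat $+1$ as true and $-1$ as false, so $\wedge=\min$, $\vee=\max$. Each rule is given by two neighborhoods $\mathcal R^\wedge,\mathcal R^\vee$; a $\wedge$-update at site $\mathbf r$ replaces $s_{\mathbf r}$ by $\bigwedge_{\boldsymbol\delta\in\mathcal R^\wedge}s_{\mathbf r+\boldsymbol\delta}$, and a $\vee$-update replaces it by $\bigvee_{\boldsymbol\delta\in\mathcal R^\vee}s_{\mathbf r+\boldsymbol\delta}$. For $\mathsf{R}$: $\mathcal R^\wedge=\{\hat{\mathbf y},\mathbf 0,-\hat{\mathbf y}\}$, $\mathcal R^\vee=\{\hat{\mathbf x},\mathbf 0,-\hat{\mathbf x}\}$. For $\mathsf{F}$: $\mathcal R^\vee=\{\hat{\mathbf x},-\hat{\mathbf x}-\hat{\mathbf y}\}$, $\mathcal R^\wedge=\{\hat{\mathbf x}+\hat{\mathbf y},-\hat{\mathbf y}\}$. For $\mathsf{M}$: $\mathcal R^\vee=\{\hat{\mathbf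 x},\hat{\mathbf y}\}$, $\mathcal R^\wedge=\{\hat{\mathbf x},-\hat{\mathbf y}\}$. Noiseless asynchronous dynamics: sites are updated at times given by independent Poisson clocks, and each update is a $\wedge$-update or a $\vee$-update with probability $1/2$ each. A configuration is absorbing if no such update can change it. *)

theory Defs
  imports Main
begin

text \<open>Sites of the L x L torus are represented by integer pairs; a configuration is a
 function on int x int that is L-periodic in both coordinates with values in {1,-1}
 (+1 = true, -1 = false).\<close>

type_synonym site = "int \<times> int"
type_synonym config = "site \<Rightarrow> int"

definition is_config :: "int \<Rightarrow> config \<Rightarrow> bool" where
  "is_config L s \<longleftrightarrow> (\<forall>i j. s (i, j) \<in> {1, -1} \<and> s (i + L, j) = s (i, j) \<and> s (i, j + L) = s (i, j))"

type_synonym rule = "site set \<times> site set"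

definition same_site :: "int \<Rightarrow> site \<Rightarrow> site \<Rightarrow> bool" where
  "same_site L q r \<longleftrightarrow> fst q mod L = fst r mod L \<and> snd q mod L = snd r mod L"

definition shift :: "site \<Rightarrow> site \<Rightarrow> site" where
  "shift r d = (fst r + fst d, snd r + snd d)"

definition wedge_update :: "int \<Rightarrow> rule \<Rightarrow> config \<Rightarrow> site \<Rightarrow> config" where
  "wedge_update L \<rho> s r = (\<lambda>q. if same_site L q r then Min ((\<lambda>d. s (shift r d)) ` fst \<rho>) else s q)"

definition vee_update :: "int \<Rightarrow> rule \<Rightarrow> config \<Rightarrow> site \<Rightarrow> config" where
  "vee_update L \<rho> s r = (\<lambda>q. if same_site L q r then Max ((\<lambda>d. s (shift r d)) ` snd \<rho>) else s q)"

definition absorbing :: "int \<Rightarrow> rule \<Rightarrow> config \<Rightarrow> bool" where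
  "absorbing L \<rho> s \<longleftrightarrow> (\<forall>r. wedge_update L \<rho> s r = s \<and> vee_update L \<rho> s r = s)"

definition rule_R :: rule where
  "rule_R = ({(0, 1), (0, 0), (0, -1)}, {(1, 0), (0, 0), (-1, 0)})"

definition rule_F :: rule where
  "rule_F = ({(1, 1), (0, -1)}, {(1, 0), (-1, -1)})"

definition rule_M :: rule where
  "rule_M = ({(1, 0), (0, -1)}, {(1, 0), (0, 1)})"

definition s_plus :: config where "s_plus = (\<lambda>_. 1)"
definition s_minus :: config where "s_minus = (\<lambda>_. -1)"

end

theory Submission
  imports Defs
begin

lemma abs_D:
  assumes "absorbing L \<rho> s"
  shows "s r = Min ((\<lambda>d. s (shift r d)) ` fst \<rho>) \<and> s r = Max ((\<lambda>d. s (shift r d)) ` snd \<rho>)"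
proof -
  have "wedge_update L \<rho> s r = s" "vee_update L \<rho> s r = s"
    using assms unfolding absorbing_def by blast+
  then have "wedge_update L \<rho> s r r = s r" "vee_update L \<rho> s r r = s r" by simp_all
  then show ?thesis unfolding wedge_update_def vee_update_def same_site_def by simp
qed

lemma perx_nat:
  fixes s :: config
  assumes "\<And>i j. s (i + L, j) = s (i, j)"
  shows "s (i + int m * L, j) = s (i, j)"
proof (induction m arbitrary: i)
  case 0 then show ?case by simp
next
  case (Suc m)
  have "s (i + int (Suc m) * L, j) = s ((i + int m * L) + L, j)" by (simp add: algebra_simps)
  also have "\<dots> = s (i + int m * L, j)" using assms by blast
  finally show ?case using Suc by simp
qed

lemma perx:
  fixes s :: config
  assumes "\<And>i j. s (i + L, j) = s (i, j)"
  shows "s (i + k * L, j) = s (i, j)"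
proof (cases "k \<ge> 0")
  case True then show ?thesis using perx_nat[OF assms, of i "nat k" j] by simp
next
  case False
  have "s (i + k * L + int (nat (-k)) * L, j) = s (i + k * L, j)" using perx_nat[OF assms] by blast
  then show ?thesis using False by (simp add: algebra_simps)
qed

lemma pery:
  fixes s :: config
  assumes "\<And>i j. s (i, j + L) = s (i, j)"
  shows "s (i, j + k * L) = s (i, j)"
proof -
  define t :: config where "t = (\<lambda>(a, b). s (b, a))"
  have "\<And>i j. t (i + L, j) = t (i, j)" using assms unfolding t_def by simp
  from perx[OF this, of j k i] show ?thesis unfolding t_def by simp
qed

lemma chain:
  fixes s :: config
  assumes "is_config L s" "L \<ge> 1" "\<And>i j. s (i, j) \<le> s (i + a, j + b)"
  shows "s (i + a, j + b) = s (i, j)"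
proof -
  have c: "s (i, j) \<le> s (i + int n * a, j + int n * b)" for n :: nat and i j
  proof (induction n arbitrary: i j)
    case 0 then show ?case by simp
  next
    case (Suc n)
    have "s (i, j) \<le> s (i + int n * a, j + int n * b)" using Suc by blast
    also have "\<dots> \<le> s (i + int n * a + a, j + int n * b + b)" using assms(3) by blast
    finally show ?case by (simp add: algebra_simps)
  qed
  have px: "\<And>i j. s (i + L, j) = s (i, j)" and py: "\<And>i j. s (i, j + L) = s (i, j)"
    using assms(1) unfolding is_config_def by auto
  have "s (i + a, j + b) \<le> s (i + a + int (nat (L - 1)) * a, j + b + int (nat (L - 1)) * b)"
    using c by blast
  also have "\<dots> = s (i + a * L, j + b * L)"
    using assms(2) by (simp add: algebra_simps)
  also have "\<dots> = s (i, j + b * L)" using perx[OF px] by blast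
  also have "\<dots> = s (i, j)" using pery[OF py] by blast
  finally have "s (i + a, j + b) \<le> s (i, j)" .
  with assms(3)[of i j] show ?thesis by simp
qed

lemma const:
  fixes s :: config
  assumes "\<And>i j. s (i + 1, j) = s (i, j)" "\<And>i j. s (i, j + 1) = s (i, j)"
  shows "s (i, j) = s (0, 0)"
proof -
  have a: "s (i, j) = s (0, j)" for i j
  proof (induction i rule: int_induct[where k = 0])
    case base then show ?case by simp
  next
    case (step1 i) then show ?case using assms(1) by simp
  next
    case (step2 i) then show ?case using assms(1)[of "i - 1" j] by simp
  qed
  have b: "s (0, j) = s (0, 0)" for j
  proof (induction j rule: int_induct[where k = 0])
    case base then show ?case by simp
  next
    case (step1 j) then show ?case using assms(2) by simp
  next
    case (step2 j) then show ?case using assms(2)[of 0 "j - 1"] by simp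
  qed
  show ?thesis using a[of i j] b[of j] by (rule trans)
qed

theorem mainTheorem3:
  fixes L :: int and \<rho> :: rule and s :: config
  assumes "L \<ge> 1"
    and "\<rho> \<in> {rule_R, rule_F, rule_M}"
    and "is_config L s"
  shows "absorbing L \<rho> s \<longleftrightarrow> s \<in> {s_plus, s_minus}"
proof
  assume ab: "absorbing L \<rho> s"
  have D: "\<And>i j. s (i, j) = Min ((\<lambda>d. s (shift (i, j) d)) ` fst \<rho>) \<and>
      s (i, j) = Max ((\<lambda>d. s (shift (i, j) d)) ` snd \<rho>)"
    using abs_D[OF ab] by blast
  have X: "\<And>i j. s (i + 1, j) = s (i, j)" and Y: "\<And>i j. s (i, j + 1) = s (i, j)"
  proof -
    have "(\<forall>i j. s (i + 1, j) = s (i, j)) \<and> (\<forall>i j. s (i, j + 1) = s (i, j))"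
      using assms(2)
    proof (elim insertE emptyE)
      assume r: "\<rho> = rule_R"
      have h: "s (i, j) \<le> s (i, j + 1) \<and> s (i, j) \<le> s (i, j - 1) \<and>
                  s (i, j) \<ge> s (i + 1, j) \<and> s (i, j) \<ge> s (i - 1, j)" for i j
        proof -
        have "s (i, j) = Min ((\<lambda>d. s (shift (i, j) d)) ` fst rule_R) \<and> s (i, j) = Max ((\<lambda>d. s (shift (i, j) d)) ` snd rule_R)"
          using D[of i j] r by simp
        then show ?thesis unfolding rule_R_def shift_def by (simp add: min_def max_def split: if_splits)
      qed
      show ?thesis
      proof (intro conjI allI)
        fix i j
        show "s (i + 1, j) = s (i, j)" using h[of i j] h[of "i + 1" j] by simp
        show "s (i, j + 1) = s (i, j)" using h[of i j] h[of i "j + 1"] by simp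
      qed
    next
      assume r: "\<rho> = rule_F"
      have h: "s (i, j) \<le> s (i + 1, j + 1) \<and> s (i, j) \<le> s (i, j - 1) \<and>
                  s (i, j) \<ge> s (i + 1, j) \<and> s (i, j) \<ge> s (i - 1, j - 1)" for i j
        proof -
        have "s (i, j) = Min ((\<lambda>d. s (shift (i, j) d)) ` fst rule_F) \<and> s (i, j) = Max ((\<lambda>d. s (shift (i, j) d)) ` snd rule_F)"
          using D[of i j] r by simp
        then show ?thesis unfolding rule_F_def shift_def by (simp add: min_def max_def split: if_splits)
      qed
      have c1: "s (i + 0, j + -1) = s (i, j)" for i j
        by (rule chain[OF assms(3) assms(1)]) (use h in simp)
      have c2: "s (i + -1, j + 0) = s (i, j)" for i j
        by (rule chain[OF assms(3) assms(1)]) (use h in \<open>metis add.commute diff_add_cancel diff_minus_eq_add minus_minus add_0_right\<close>)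
      show ?thesis
      proof (intro conjI allI)
        fix i j
        show "s (i + 1, j) = s (i, j)" using c2[of "i + 1" j] by simp
        show "s (i, j + 1) = s (i, j)" using c1[of i "j + 1"] by simp
      qed
    next
      assume r: "\<rho> = rule_M"
      have h: "s (i, j) \<le> s (i + 1, j) \<and> s (i, j) \<le> s (i, j - 1) \<and>
                  s (i, j) \<ge> s (i + 1, j) \<and> s (i, j) \<ge> s (i, j + 1)" for i j
        proof -
        have "s (i, j) = Min ((\<lambda>d. s (shift (i, j) d)) ` fst rule_M) \<and> s (i, j) = Max ((\<lambda>d. s (shift (i, j) d)) ` snd rule_M)"
          using D[of i j] r by simp
        then show ?thesis unfolding rule_M_def shift_def by (simp add: min_def max_def split: if_splits)
      qed
      have c1: "s (i + 0, j + -1) = s (i, j)" for i j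
        by (rule chain[OF assms(3) assms(1)]) (use h in simp)
      show ?thesis
      proof (intro conjI allI)
        fix i j
        show "s (i + 1, j) = s (i, j)" using h[of i j] by simp
        show "s (i, j + 1) = s (i, j)" using c1[of i "j + 1"] by simp
      qed
    qed
    then show "\<And>i j. s (i + 1, j) = s (i, j)" "\<And>i j. s (i, j + 1) = s (i, j)" by auto
  qed
  have cst: "\<And>p. s p = s (0, 0)" using const[OF X Y] by auto
  have "s (0, 0) \<in> {1, -1}" using assms(3) unfolding is_config_def by blast
  then show "s \<in> {s_plus, s_minus}"
    unfolding s_plus_def s_minus_def using cst by auto
next
  assume "s \<in> {s_plus, s_minus}"
  then obtain c where s: "s = (\<lambda>_. c)" unfolding s_plus_def s_minus_def by auto
  show "absorbing L \<rho> s"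
    using assms(2) unfolding absorbing_def wedge_update_def vee_update_def s
    by (auto simp: rule_R_def rule_F_def rule_M_def)
qed

end
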